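(* Let $G$ be a connected ribbon graph. Then (1) $P_{\langle\delta\rangle}(G,1)=P_{\langle\tau\delta\tau\rangle}(G,1)=2^{e(G)}$, $P_{\langle\delta\tau\rangle}(G,1)=3^{e(G)}$, and $P_{\langle\delta,\tau\rangle}(G,1)=6^{e(G)}$; (2) for each $\bullet\in\{\langle\delta\rangle,\langle\delta\tau\rangle,\langle\tau\delta\tau\rangle,\langle\delta,\tau\rangle\}$ and every $H\in\mathrm{Orb}_\bullet(G)$, $P_\bullet(G,x)=P_\bullet(H,x)$; (3) for each $\bullet\in\{\langle\delta\rangle,\langle\delta\tau\rangle,\langle\tau\delta\tau\rangle,\langle\delta,\tau\rangle\}$, the polynomial $P_\bullet(G,x)$ has minimum degree $1$ and is interpolating, i.e. if its maximum degree is $M$ then the coefficient of $x^k$ is nonzero for every $1\le k\le M$.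
   Context: A ribbon graph $G=(V(G),E(G))$ is a (orientable or non-orientable) surface with boundary, represented as the union of a set $V(G)$ of vertex discs and a set $E(G)$ of edge discs (ribbons) such that vertices and edges intersect in disjoint line segments, each such segment lies on the boundary of exactly one vertex and exactly one edge, and every edge contains exactly two such segments. $v(G)$, $e(G)$ denote the numbers of vertices and edges. For $A\subseteq E(G)$, the partial dual $G^{\delta(A)}$ is obtained by gluing a disc along each boundary component of the spanning ribbon subgraph $(V(G),A)$ (these discs become the vertex discs), removing the interiors of the original vertex discs, and keeping the edge ribbons. The partial Petrial $G^{\tau(A)}$ adds a half-twist to each edge in $A$. For a word $w=w_1\cdots w_n$ over $\{\delta,\tau\}$, $G^{w(A)}=(\cdots(G^{w_n(A)})^{w_{n-1}(A)}\cdots)^{w_1(A)}$ (rightmost letter applied first), $G^{1(A)}=G$, and $G^{\xi(A)\pi(B)}=(G^{\xi(A)})^{\pi(B)}$. Orbits: $\mathrm{Orb}_{\langle\delta\rangle}(G)=\{G^{\delta(A)}:A\subseteq E(G)\}$, $\mathrm{Orb}_{\langle\tau\delta\tau\rangle}(G)=\{G^{\tau\delta\tau(A)}:A\subseteq E(G)\}$, $\mathrm{Orb}_{\langle\delta\tau\rangle}(G)=\{G^{1(A_1)\tau\delta(A_2)\delta\tau(A_3)}\}$ over ordered partitions $(A_1,A_2,A_3)$ of $E(G)$ into pairwise disjoint possibly empty parts, and $\mathrm{Orb}_{\langle\delta,\tau\rangle}(G)=\{G^{1(A_1)\delta(A_2)\tau(A_3)\tau\delta(A_4)\delta\tau(A_5)\tau\delta\tau(A_6)}\}$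 over ordered partitions $(A_1,\dots,A_6)$ of $E(G)$. Vertex polynomials (sums over the same index sets, counted with multiplicity): $P_{\langle\delta\rangle}(G,x)=\sum_{A\subseteq E(G)}x^{v(G^{\delta(A)})}$; $P_{\langle\tau\delta\tau\rangle}(G,x)=\sum_{A\subseteq E(G)}x^{v(G^{\tau\delta\tau(A)})}$; $P_{\langle\delta\tau\rangle}(G,x)=\sum_{(A_1,A_2,A_3)}x^{v(G^{1(A_1)\tau\delta(A_2)\delta\tau(A_3)})}$; $P_{\langle\delta,\tau\rangle}(G,x)=\sum_{(A_1,\dots,A_6)}x^{v(G^{1(A_1)\delta(A_2)\tau(A_3)\tau\delta(A_4)\delta\tau(A_5)\tau\delta\tau(A_6)})}$. *)

theory Defs
  imports Main "HOL-Library.FuncSet" "HOL-Computational_Algebra.Polynomial"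
begin

text \<open>Ribbon graphs encoded combinatorially (graph-encoded maps).
Each edge ribbon is a rectangle with four corners (flags). Three fixed-point-free
involutions on the flags:
  sg: joins the two corners of the same edge--vertex attaching segment;
  lg: joins the two corners on the same long side (edge boundary arc) of the ribbon;
  nu: joins consecutive corners along a vertex-disc boundary arc.
Vertices of positive degree are the orbits of the group generated by sg and nu;
isolated vertices (vertex discs meeting no edge) are counted separately by iso.\<close>

record 'a ribbon =
  flags :: "'a set"
  iso :: nat
  sg :: "'a \<Rightarrow> 'a"
  lg :: "'a \<Rightarrow> 'a"
  nu :: "'a \<Rightarrow> 'a"

definition fpf_involution :: "'a set \<Rightarrow> ('a \<Rightarrow> 'a) \<Rightarrow> bool" where
  "fpf_involution F p \<longleftrightarrow> (\<forall>f\<in>F. p f \<in> F \<and> p (p f) = f \<and> p f \<noteq> f)"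

definition ribbon_graph :: "'a ribbon \<Rightarrow> bool" where
  "ribbon_graph G \<longleftrightarrow> finite (flags G)
     \<and> fpf_involution (flags G) (sg G) \<and> fpf_involution (flags G) (lg G)
     \<and> fpf_involution (flags G) (nu G)
     \<and> (\<forall>f\<in>flags G. sg G (lg G f) = lg G (sg G f) \<and> sg G f \<noteq> lg G f)"

definition edge_of :: "'a ribbon \<Rightarrow> 'a \<Rightarrow> 'a set" where
  "edge_of G f = {f, sg G f, lg G f, sg G (lg G f)}"

definition edges :: "'a ribbon \<Rightarrow> 'a set set" where
  "edges G = edge_of G ` flags G"

definition vrel :: "'a ribbon \<Rightarrow> ('a \<times> 'a) set" where
  "vrel G = {(f, sg G f) | f. f \<in> flags G} \<union> {(f, nu G f) | f. f \<in> flags G}"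

definition vertices :: "'a ribbon \<Rightarrow> 'a set set" where
  "vertices G = {(vrel G)\<^sup>* `` {f} | f. f \<in> flags G}"

definition nv :: "'a ribbon \<Rightarrow> nat" where
  "nv G = iso G + card (vertices G)"

definition ne :: "'a ribbon \<Rightarrow> nat" where
  "ne G = card (edges G)"

definition allrel :: "'a ribbon \<Rightarrow> ('a \<times> 'a) set" where
  "allrel G = vrel G \<union> {(f, lg G f) | f. f \<in> flags G}"

definition connected_rg :: "'a ribbon \<Rightarrow> bool" where
  "connected_rg G \<longleftrightarrow> (flags G = {} \<and> iso G = 1)
     \<or> (iso G = 0 \<and> flags G \<noteq> {} \<and> (\<forall>f\<in>flags G. \<forall>g\<in>flags G. (f, g) \<in> (allrel G)\<^sup>*))"

definition pdual :: "'a set set \<Rightarrow> 'a ribbon \<Rightarrow> 'a ribbon" where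
  "pdual A G = G\<lparr> sg := (\<lambda>f. if edge_of G f \<in> A then lg G f else sg G f),
                  lg := (\<lambda>f. if edge_of G f \<in> A then sg G f else lg G f) \<rparr>"

text \<open>Partial Petrial: a half-twist in each edge of A makes the long sides cross.\<close>
definition ppetrial :: "'a set set \<Rightarrow> 'a ribbon \<Rightarrow> 'a ribbon" where
  "ppetrial A G = G\<lparr> lg := (\<lambda>f. if edge_of G f \<in> A then sg G (lg G f) else lg G f) \<rparr>"

datatype rop = D | T

fun apply_op :: "rop \<Rightarrow> 'a set set \<Rightarrow> 'a ribbon \<Rightarrow> 'a ribbon" where
  "apply_op D A G = pdual A G"
| "apply_op T A G = ppetrial A G"

text \<open>G^{w(A)} for w = w1...wn: the rightmost letter is applied first.\<close>
fun apply_word :: "rop list \<Rightarrow> 'a set set \<Rightarrow> 'a ribbon \<Rightarrow> 'a ribbon" where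
  "apply_word [] A G = G"
| "apply_word (w # ws) A G = apply_op w A (apply_word ws A G)"

text \<open>G^{xi1(A1) xi2(A2) ...} = ((G^{xi1(A1)})^{xi2(A2)})...\<close>
fun apply_seq :: "(rop list \<times> 'a set set) list \<Rightarrow> 'a ribbon \<Rightarrow> 'a ribbon" where
  "apply_seq [] G = G"
| "apply_seq ((w, A) # rest) G = apply_seq rest (apply_word w A G)"

text \<open>Ordered partitions of E(G) into n possibly empty parts are encoded by
functions p : E(G) \<rightarrow> {0..<n}; part i is the preimage of i.\<close>
definition opartitions :: "'a ribbon \<Rightarrow> nat \<Rightarrow> ('a set \<Rightarrow> nat) set" where
  "opartitions G n = PiE (edges G) (\<lambda>_. {..<n})"

definition part :: "'a ribbon \<Rightarrow> ('a set \<Rightarrow> nat) \<Rightarrow> nat \<Rightarrow> 'a set set" where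
  "part G p i = {e \<in> edges G. p e = i}"

definition G_dt :: "'a ribbon \<Rightarrow> ('a set \<Rightarrow> nat) \<Rightarrow> 'a ribbon" where
  "G_dt G p = apply_seq [([], part G p 0), ([T, D], part G p 1), ([D, T], part G p 2)] G"

definition G_dT :: "'a ribbon \<Rightarrow> ('a set \<Rightarrow> nat) \<Rightarrow> 'a ribbon" where
  "G_dT G p = apply_seq [([], part G p 0), ([D], part G p 1), ([T], part G p 2),
                         ([T, D], part G p 3), ([D, T], part G p 4), ([T, D, T], part G p 5)] G"

definition Orb_d :: "'a ribbon \<Rightarrow> 'a ribbon set" where
  "Orb_d G = {apply_word [D] A G | A. A \<subseteq> edges G}"

definition Orb_tdt :: "'a ribbon \<Rightarrow> 'a ribbon set" where
  "Orb_tdt G = {apply_word [T, D, T] A G | A. A \<subseteq> edges G}"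

definition Orb_dt :: "'a ribbon \<Rightarrow> 'a ribbon set" where
  "Orb_dt G = G_dt G ` opartitions G 3"

definition Orb_dT :: "'a ribbon \<Rightarrow> 'a ribbon set" where
  "Orb_dT G = G_dT G ` opartitions G 6"

definition P_d :: "'a ribbon \<Rightarrow> int poly" where
  "P_d G = (\<Sum>A\<in>Pow (edges G). monom 1 (nv (apply_word [D] A G)))"

definition P_tdt :: "'a ribbon \<Rightarrow> int poly" where
  "P_tdt G = (\<Sum>A\<in>Pow (edges G). monom 1 (nv (apply_word [T, D, T] A G)))"

definition P_dt :: "'a ribbon \<Rightarrow> int poly" where
  "P_dt G = (\<Sum>p\<in>opartitions G 3. monom 1 (nv (G_dt G p)))"

definition P_dT :: "'a ribbon \<Rightarrow> int poly" where
  "P_dT G = (\<Sum>p\<in>opartitions G 6. monom 1 (nv (G_dT G p)))"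

definition mindeg1_interpolating :: "int poly \<Rightarrow> bool" where
  "mindeg1_interpolating P \<longleftrightarrow> coeff P 0 = 0 \<and> coeff P 1 \<noteq> 0
     \<and> (\<forall>k. 1 \<le> k \<and> k \<le> degree P \<longrightarrow> coeff P k \<noteq> 0)"

end

theory Submission
  imports Defs
begin

definition VV :: "'a set \<Rightarrow> ('a\<Rightarrow>'a) \<Rightarrow> ('a\<Rightarrow>'a) \<Rightarrow> ('a\<times>'a) set" where
  "VV F s n = {(f, s f) | f. f \<in> F} \<union> {(f, n f) | f. f \<in> F}"

definition cls :: "'a set \<Rightarrow> ('a\<Rightarrow>'a) \<Rightarrow> ('a\<Rightarrow>'a) \<Rightarrow> 'a set set" where
  "cls F s n = {(VV F s n)\<^sup>* `` {f} | f. f \<in> F}"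

lemma VV_sym:
  assumes "fpf_involution F s" "fpf_involution F n"
  shows "sym (VV F s n)"
  using assms unfolding sym_def VV_def fpf_involution_def by force

lemma rt_sym: "sym V \<Longrightarrow> (x,y) \<in> V\<^sup>* \<Longrightarrow> (y,x) \<in> V\<^sup>*"
  by (metis sym_conv_converse_eq rtrancl_converseI rtrancl_converse)

lemma rt_split:
  assumes "(x,y) \<in> (V0 \<union> X)\<^sup>*"
  shows "(x,y) \<in> V0\<^sup>* \<or> (\<exists>z\<in>fst ` X. (x,z) \<in> V0\<^sup>*)"
  using assms
proof (induction rule: rtrancl_induct)
  case base then show ?case by simp
next
  case (step y z)
  then show ?case
    by (metis UnE fst_conv image_eqI rtrancl.rtrancl_into_rtrancl)
qed

lemma psi_in: "fpf_involution F s \<Longrightarrow> fpf_involution F n \<Longrightarrow> x \<in> F \<Longrightarrow> ((s \<circ> n)^^k) x \<in> F"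
  by (induction k) (auto simp: fpf_involution_def)

lemma psi_ne:
  assumes "fpf_involution F s" "fpf_involution F n"
  shows "x \<in> F \<Longrightarrow> ((s \<circ> n)^^k) x \<noteq> n x"
proof (induction k arbitrary: x rule: less_induct)
  case (less k)
  show ?case
  proof (cases k)
    case 0 then show ?thesis using less assms by (auto simp: fpf_involution_def)
  next
    case (Suc k1)
    show ?thesis
    proof (cases k1)
      case 0 then show ?thesis using less assms Suc by (auto simp: fpf_involution_def)
    next
      case (Suc m)
      show ?thesis
      proof
        assume h: "((s \<circ> n)^^k) x = n x"
        define y where "y = ((s \<circ> n)^^(Suc m)) x"
        have yF: "y \<in> F" using psi_in[OF assms less.prems] y_def by blast
        have "s (n y) = n x" using h \<open>k = Suc k1\<close> Suc y_def by simp
        then have "n y = s (n x)" using assms yF less.prems unfolding fpf_involution_def by metis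
        then have "y = n (s (n x))" using assms yF unfolding fpf_involution_def by metis
        moreover have "y = ((s \<circ> n)^^m) ((s \<circ> n) x)" using y_def by (simp add: funpow_Suc_right del: funpow.simps)
        moreover have "(s \<circ> n) x \<in> F" using assms less.prems unfolding fpf_involution_def by auto
        ultimately show False using less.IH[of m "(s \<circ> n) x"] \<open>k = Suc k1\<close> Suc by (auto simp: comp_def)
      qed
    qed
  qed
qed

lemma psi_period:
  assumes "finite F" "fpf_involution F s" "fpf_involution F n" "a \<in> F"
  shows "\<exists>m>0. ((s \<circ> n)^^m) a = a"
proof -
  define p where "p = (\<lambda>x. if x \<in> F then s (n x) else x)"
  have "inj p" unfolding inj_def p_def using assms(2,3) unfolding fpf_involution_def by metis
  have eq: "(p^^k) a = ((s \<circ> n)^^k) a" for k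
    using psi_in[OF assms(2,3,4), unfolded comp_def] psi_in[OF assms(2,3,4)] by (induction k) (auto simp: p_def)
  have "{y. \<exists>k. y = (p ^^ k) a} \<subseteq> F" using eq psi_in[OF assms(2,3,4)] by auto
  then have "finite {y. \<exists>k. y = (p ^^ k) a}" using assms(1) finite_subset by blast
  then obtain m where "m > 0" "(p^^m) a = a" using funpow_inj_finite[OF \<open>inj p\<close>] by blast
  then show ?thesis using eq by auto
qed

lemma cycle_conn:
  assumes fin: "finite F" and s: "fpf_involution F s" and n: "fpf_involution F n" and aF: "a \<in> F"
    and Bd: "Bd \<inter> (VV F s n)\<^sup>* `` {a} \<subseteq> {a, s a}"
  shows "(a, s a) \<in> ({(f, s f) | f. f \<in> F - Bd} \<union> {(f, n f) | f. f \<in> F})\<^sup>*"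
proof -
  define V0 where "V0 = {(f, s f) | f. f \<in> F - Bd} \<union> {(f, n f) | f. f \<in> F}"
  define \<psi> where "\<psi> = s \<circ> n"
  have V0V: "V0 \<subseteq> VV F s n" unfolding V0_def VV_def by auto
  obtain m0 where m0: "m0 > 0" "(\<psi>^^m0) a = a" using psi_period[OF fin s n aF] \<psi>_def by blast
  define m where "m = (LEAST m. m > 0 \<and> (\<psi>^^m) a = a)"
  have m: "m > 0" "(\<psi>^^m) a = a" using LeastI[of "\<lambda>m. m > 0 \<and> (\<psi>^^m) a = a", OF conjI[OF m0]] m_def by auto
  have mmin: "\<And>j. 0 < j \<Longrightarrow> j < m \<Longrightarrow> (\<psi>^^j) a \<noteq> a"
    using not_less_Least m_def by blast
  have inF: "(\<psi>^^j) a \<in> F" for j using psi_in[OF s n aF] \<psi>_def by simp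
  have path: "j < m \<Longrightarrow> (a, (\<psi>^^j) a) \<in> V0\<^sup>*" for j
  proof (induction j)
    case 0 then show ?case by simp
  next
    case (Suc j)
    let ?x = "(\<psi>^^j) a"
    have IH: "(a, ?x) \<in> V0\<^sup>*" using Suc by simp
    have nx: "n ?x \<in> F" using inF n unfolding fpf_involution_def by blast
    have s1: "(?x, n ?x) \<in> V0" using inF unfolding V0_def by blast
    have inC: "n ?x \<in> (VV F s n)\<^sup>* `` {a}"
    proof -
      have "(a, ?x) \<in> (VV F s n)\<^sup>*" using IH V0V rtrancl_mono by blast
      moreover have "(?x, n ?x) \<in> VV F s n" using inF unfolding VV_def by blast
      ultimately show ?thesis by auto
    qed
    have ne1: "n ?x \<noteq> a"
    proof
      assume "n ?x = a"
      then have "?x = n a" using n inF unfolding fpf_involution_def by metis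
      then show False using psi_ne[OF s n aF, of j] \<psi>_def by simp
    qed
    have ne2: "n ?x \<noteq> s a"
    proof
      assume "n ?x = s a"
      then have "s (n ?x) = a" using s aF unfolding fpf_involution_def by metis
      then have "(\<psi>^^(Suc j)) a = a" using \<psi>_def by simp
      then show False using mmin[of "Suc j"] Suc.prems by simp
    qed
    have "n ?x \<notin> Bd" using Bd inC ne1 ne2 by blast
    then have s2: "(n ?x, s (n ?x)) \<in> V0" using nx unfolding V0_def by blast
    have "(\<psi>^^(Suc j)) a = s (n ?x)" using \<psi>_def by simp
    then show ?case using IH s1 s2 by (metis rtrancl.rtrancl_into_rtrancl)
  qed
  obtain m' where mm: "m = Suc m'" using m(1) gr0_implies_Suc by blast
  let ?x = "(\<psi>^^m') a"
  have "s (n ?x) = a" using m(2) mm \<psi>_def by simp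
  then have eqb: "n ?x = s a" using s n inF unfolding fpf_involution_def by metis
  have "(a, ?x) \<in> V0\<^sup>*" using path mm by simp
  moreover have "(?x, n ?x) \<in> V0" using inF unfolding V0_def by blast
  ultimately show ?thesis using eqb V0_def by (metis rtrancl.rtrancl_into_rtrancl)
qed

lemma rt_eq_class:
  assumes "sym V" "(x,y) \<in> V\<^sup>*" shows "V\<^sup>* `` {x} = V\<^sup>* `` {y}"
  using assms rt_sym by (meson Image_singleton_iff equalityI rtrancl_trans subsetI)

lemma merge:
  assumes fin: "finite F" and s: "fpf_involution F s" and s': "fpf_involution F s'"
    and n: "fpf_involution F n" and aF: "a \<in> F" and cF: "c \<in> F"
    and nrel: "(a,c) \<notin> (VV F s n)\<^sup>*"
    and s'a: "s' a \<in> {c, s c}"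
    and s'in: "\<forall>x\<in>{a, s a, c, s c}. s' x \<in> {a, s a, c, s c}"
    and same: "\<forall>x\<in>F - {a, s a, c, s c}. s' x = s x"
  shows "card (cls F s' n) = card (cls F s n) - 1 \<and> card (cls F s n) \<ge> 2"
proof -
  define b where "b = s a"
  define d where "d = s c"
  define Ds where "Ds = {a, b, c, d}"
  define V where "V = VV F s n"
  define V' where "V' = VV F s' n"
  define V0 where "V0 = {(f, s f) | f. f \<in> F - Ds} \<union> {(f, n f) | f. f \<in> F}"
  define X where "X = {(a,b),(b,a),(c,d),(d,c)}"
  define X' where "X' = {(f, s' f) | f. f \<in> Ds}"
  define R where "R = V\<^sup>*"
  define R' where "R' = V'\<^sup>*"
  define O1 where "O1 = R `` {a}"
  define O2 where "O2 = R `` {c}"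
  have bF: "b \<in> F" and dF: "d \<in> F" and sb: "s b = a" and sd: "s d = c"
    using s aF cF unfolding b_def d_def fpf_involution_def by auto
  have DsF: "Ds \<subseteq> F" using aF bF cF dF Ds_def by auto
  have symV: "sym V" using VV_sym[OF s n] V_def by simp
  have symV': "sym V'" using VV_sym[OF s' n] V'_def by simp
  have VX: "V = V0 \<union> X"
  proof
    show "V \<subseteq> V0 \<union> X"
    proof
      fix p assume "p \<in> V"
      then obtain f where fF: "f \<in> F" and p: "p = (f, s f) \<or> p = (f, n f)" unfolding V_def VV_def by blast
      show "p \<in> V0 \<union> X"
      proof (cases "f \<in> Ds")
        case True
        then have "f = a \<or> f = b \<or> f = c \<or> f = d" unfolding Ds_def by blast
        then have "p = (f, n f) \<or> p \<in> X" using p sb sd unfolding X_def b_def d_def by blast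
        then show ?thesis using fF unfolding V0_def by blast
      next
        case False
        then show ?thesis using fF p unfolding V0_def by blast
      qed
    qed
    show "V0 \<union> X \<subseteq> V"
    proof
      fix p assume "p \<in> V0 \<union> X"
      then have "(\<exists>f\<in>F. p = (f, s f) \<or> p = (f, n f)) \<or> p \<in> X" unfolding V0_def by blast
      moreover have "p \<in> X \<Longrightarrow> \<exists>f\<in>F. p = (f, s f)"
        unfolding X_def using aF bF cF dF sb sd b_def d_def by blast
      ultimately show "p \<in> V" unfolding V_def VV_def by blast
    qed
  qed
  have VX': "V' = V0 \<union> X'"
  proof
    show "V' \<subseteq> V0 \<union> X'"
    proof
      fix p assume "p \<in> V'"
      then obtain f where fF: "f \<in> F" and p: "p = (f, s' f) \<or> p = (f, n f)" unfolding V'_def VV_def by blast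
      show "p \<in> V0 \<union> X'"
      proof (cases "f \<in> Ds")
        case True
        then show ?thesis using fF p unfolding V0_def X'_def by blast
      next
        case False
        then have "s' f = s f" using same fF unfolding Ds_def b_def d_def by blast
        then show ?thesis using fF p False unfolding V0_def by auto
      qed
    qed
    show "V0 \<union> X' \<subseteq> V'"
    proof
      fix p assume "p \<in> V0 \<union> X'"
      then have "(\<exists>f\<in>F - Ds. p = (f, s f)) \<or> (\<exists>f\<in>F. p = (f, n f)) \<or> (\<exists>f\<in>Ds. p = (f, s' f))"
        unfolding V0_def X'_def by blast
      moreover have "\<And>f. f \<in> F - Ds \<Longrightarrow> s' f = s f" using same unfolding Ds_def b_def d_def by blast
      ultimately have "\<exists>f\<in>F. p = (f, s' f) \<or> p = (f, n f)" using DsF by (metis DiffD1 subsetD)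
      then show "p \<in> V'" unfolding V'_def VV_def by blast
    qed
  qed
  have fX: "fst ` X = Ds" unfolding X_def Ds_def by auto
  have fX': "fst ` X' = Ds" unfolding X'_def by force
  have V0V: "V0 \<subseteq> V" using VX by auto
  have V0V': "V0 \<subseteq> V'" using VX' by auto
  have V0R: "V0\<^sup>* \<subseteq> R" using V0V rtrancl_mono R_def by blast
  have V0R': "V0\<^sup>* \<subseteq> R'" using V0V' rtrancl_mono R'_def by blast
  have bO1: "b \<in> O1" unfolding O1_def R_def V_def VV_def b_def using aF by blast
  have dO2: "d \<in> O2" unfolding O2_def R_def V_def VV_def d_def using cF by blast
  have aO1: "a \<in> O1" and cO2: "c \<in> O2" unfolding O1_def O2_def R_def by auto
  have cO1: "c \<notin> O1" using nrel unfolding O1_def R_def V_def by auto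
  have dO1: "d \<notin> O1"
  proof
    assume "d \<in> O1"
    then have "(a,d) \<in> R" "(c,d) \<in> R" using dO2 unfolding O1_def O2_def by auto
    then have "(a,c) \<in> R" using rt_sym[OF symV] R_def by (meson rtrancl_trans)
    then show False using cO1 O1_def by auto
  qed
  have O12: "O1 \<inter> O2 = {}"
  proof (rule ccontr)
    assume "O1 \<inter> O2 \<noteq> {}"
    then obtain z where "(a,z) \<in> R" "(c,z) \<in> R" unfolding O1_def O2_def by auto
    then have "(a,c) \<in> R" using rt_sym[OF symV] R_def by (meson rtrancl_trans)
    then show False using cO1 O1_def by auto
  qed
  have aO2: "a \<notin> O2" "b \<notin> O2" using O12 aO1 bO1 by auto
  have Ds1: "Ds \<inter> V\<^sup>* `` {a} \<subseteq> {a, s a}" using cO1 dO1 unfolding Ds_def O1_def R_def b_def by auto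
  have Ds2: "Ds \<inter> V\<^sup>* `` {c} \<subseteq> {c, s c}" using aO2 unfolding Ds_def O2_def R_def d_def by auto
  have ab0: "(a, b) \<in> V0\<^sup>*" using cycle_conn[OF fin s n aF, of Ds] Ds1 V0_def V_def b_def by simp
  have Ds_eq: "Ds = {c, d, a, b}" using Ds_def by auto
  have cd0: "(c, d) \<in> V0\<^sup>*" using cycle_conn[OF fin s n cF, of Ds] Ds2 V0_def V_def d_def by simp
  have classR: "\<And>x y. (x,y) \<in> R \<Longrightarrow> R `` {x} = R `` {y}" using rt_eq_class[OF symV] R_def by simp
  have classR': "\<And>x y. (x,y) \<in> R' \<Longrightarrow> R' `` {x} = R' `` {y}" using rt_eq_class[OF symV'] R'_def by simp
  have claimA: "R' `` {x} = R `` {x}" if xO: "x \<notin> O1 \<union> O2" for x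
  proof -
    have noreach: "(x, z) \<notin> V0\<^sup>*" if "z \<in> Ds" for z
    proof
      assume "(x,z) \<in> V0\<^sup>*"
      then have xz: "(x,z) \<in> R" using V0R by blast
      have "z \<in> O1 \<union> O2" using that aO1 bO1 cO2 dO2 Ds_def by auto
      then have "(a,z) \<in> R \<or> (c,z) \<in> R" unfolding O1_def O2_def by auto
      then have "(a,x) \<in> R \<or> (c,x) \<in> R" using xz rt_sym[OF symV] R_def by (meson rtrancl_trans)
      then show False using xO O1_def O2_def by auto
    qed
    show ?thesis
    proof
      show "R' `` {x} \<subseteq> R `` {x}"
      proof
        fix y assume "y \<in> R' `` {x}"
        then have "(x,y) \<in> (V0 \<union> X')\<^sup>*" using VX' R'_def by simp
        then have "(x,y) \<in> V0\<^sup>*" using rt_split[of x y V0 X'] noreach fX' by auto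
        then show "y \<in> R `` {x}" using V0R by auto
      qed
      show "R `` {x} \<subseteq> R' `` {x}"
      proof
        fix y assume "y \<in> R `` {x}"
        then have "(x,y) \<in> (V0 \<union> X)\<^sup>*" using VX R_def by simp
        then have "(x,y) \<in> V0\<^sup>*" using rt_split[of x y V0 X] noreach fX by auto
        then show "y \<in> R' `` {x}" using V0R' by auto
      qed
    qed
  qed
  have sub1: "O1 \<union> O2 \<subseteq> R' `` {a}"
  proof
    have ba': "(b, a) \<in> R'" using ab0 V0R' rt_sym[OF symV'] R'_def by blast
    have dc': "(d, c) \<in> R'" using cd0 V0R' rt_sym[OF symV'] R'_def by blast
    have as': "(a, s' a) \<in> R'" using aF unfolding R'_def V'_def VV_def by blast
    have cd': "(c, d) \<in> R'" using cd0 V0R' by blast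
    have ac': "(a, c) \<in> R'" using s'a as' dc' d_def by (auto intro: rtrancl_trans simp: R'_def)
    fix y assume y: "y \<in> O1 \<union> O2"
    show "y \<in> R' `` {a}"
    proof (cases "y \<in> O1")
      case True
      then have "(y,a) \<in> (V0 \<union> X)\<^sup>*" using rt_sym[OF symV] VX R_def O1_def by auto
      then have "(y,a) \<in> V0\<^sup>* \<or> (\<exists>z\<in>Ds. (y,z) \<in> V0\<^sup>*)" using rt_split[of y a V0 X] fX by auto
      moreover have "(y,z) \<notin> V0\<^sup>*" if "z \<in> {c,d}" for z
      proof
        assume "(y,z) \<in> V0\<^sup>*"
        then have "(y,z) \<in> R" using V0R by blast
        then have "z \<in> O1" using True unfolding O1_def R_def by (meson Image_singleton_iff rtrancl_trans)
        then show False using that cO1 dO1 by auto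
      qed
      ultimately have "(y,a) \<in> V0\<^sup>* \<or> (y,b) \<in> V0\<^sup>*" unfolding Ds_def by blast
      then have "(y,a) \<in> R'" using V0R' ba' R'_def by (meson rtrancl_trans subsetD)
      then show ?thesis using rt_sym[OF symV'] R'_def by blast
    next
      case False
      then have yO2: "y \<in> O2" using y by auto
      then have "(y,c) \<in> (V0 \<union> X)\<^sup>*" using rt_sym[OF symV] VX R_def O2_def by auto
      then have "(y,c) \<in> V0\<^sup>* \<or> (\<exists>z\<in>Ds. (y,z) \<in> V0\<^sup>*)" using rt_split[of y c V0 X] fX by auto
      moreover have "(y,z) \<notin> V0\<^sup>*" if "z \<in> {a,b}" for z
      proof
        assume "(y,z) \<in> V0\<^sup>*"
        then have "(y,z) \<in> R" using V0R by blast
        then have "z \<in> O2" using yO2 unfolding O2_def R_def by (meson Image_singleton_iff rtrancl_trans)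
        then show False using that aO2 by auto
      qed
      ultimately have "(y,c) \<in> V0\<^sup>* \<or> (y,d) \<in> V0\<^sup>*" unfolding Ds_def by blast
      then have "(y,c) \<in> R'" using V0R' dc' R'_def by (meson rtrancl_trans subsetD)
      then have "(c,y) \<in> R'" using rt_sym[OF symV'] R'_def by blast
      then show ?thesis using ac' R'_def by (meson Image_singleton_iff rtrancl_trans)
    qed
  qed
  have sub2: "R' `` {a} \<subseteq> O1 \<union> O2"
  proof
    fix y assume "y \<in> R' `` {a}"
    then have "(a,y) \<in> V'\<^sup>*" using R'_def by simp
    then show "y \<in> O1 \<union> O2"
    proof (induction rule: rtrancl_induct)
      case base then show ?case using aO1 by simp
    next
      case (step u v)
      have "(u,v) \<in> V0 \<or> (u,v) \<in> X'" using step.hyps(2) VX' by auto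
      then show ?case
      proof
        assume "(u,v) \<in> V0"
        then have "(u,v) \<in> R" using V0V R_def by auto
        then have "R `` {u} = R `` {v}" using classR by simp
        moreover have "u \<in> R `` {u}" using R_def by simp
        ultimately have "v \<in> R `` {u}" using R_def by auto
        moreover have "R `` {u} = O1 \<or> R `` {u} = O2" using step.IH classR O1_def O2_def by auto
        ultimately show ?thesis by auto
      next
        assume "(u,v) \<in> X'"
        then have "v \<in> Ds" using s'in unfolding X'_def Ds_def b_def d_def by auto
        then show ?thesis using aO1 bO1 cO2 dO2 Ds_def by auto
      qed
    qed
  qed
  have claimB: "R' `` {x} = O1 \<union> O2" if "x \<in> O1 \<union> O2" for x
  proof -
    have "(a,x) \<in> R'" using sub1 that by auto
    then show ?thesis using classR' sub1 sub2 by auto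
  qed
  have claimB1: "R `` {x} = O1" if "x \<in> O1" for x using that classR O1_def by auto
  have claimB2: "R `` {x} = O2" if "x \<in> O2" for x using that classR O2_def by auto
  define K where "K = {R `` {x} | x. x \<in> F \<and> x \<notin> O1 \<union> O2}"
  have clsS: "cls F s n = K \<union> {O1, O2}"
    unfolding cls_def K_def using aF cF claimB1 claimB2 aO1 cO2 R_def V_def O1_def O2_def by blast
  have clsS': "cls F s' n = K \<union> {O1 \<union> O2}"
  proof -
    have "cls F s' n = {R' `` {x} | x. x \<in> F}" unfolding cls_def R'_def V'_def by simp
    also have "\<dots> = K \<union> {O1 \<union> O2}"
      unfolding K_def using aF aO1 claimA claimB by blast
    finally show ?thesis .
  qed
  have finK: "finite K"
  proof -
    have "K \<subseteq> (\<lambda>x. R `` {x}) ` F" unfolding K_def by auto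
    then show ?thesis using fin finite_subset by blast
  qed
  have selfR: "x \<in> R `` {x}" for x using R_def by simp
  have nK1: "O1 \<notin> K" "O2 \<notin> K" "O1 \<union> O2 \<notin> K" unfolding K_def using selfR by blast+
  have O1O2: "O1 \<noteq> O2" using cO1 cO2 by auto
  have "card (cls F s n) = card K + 2" using clsS finK nK1 O1O2 by simp
  moreover have "card (cls F s' n) = card K + 1" using clsS' finK nK1 by simp
  ultimately show ?thesis by simp
qed


definition sel :: "'a ribbon \<Rightarrow> nat \<Rightarrow> 'a \<Rightarrow> 'a" where
  "sel G k f = (if k = 0 then sg G f else if k = 1 then lg G f else sg G (lg G f))"

definition Valid :: "(nat \<times> nat) set" where
  "Valid = {(0,1),(0,2),(1,0),(1,2),(2,0),(2,1)}"

lemma rg_basic: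
  assumes "ribbon_graph G" "f \<in> flags G"
  shows "sg G f \<in> flags G" "lg G f \<in> flags G" "nu G f \<in> flags G"
    "sg G (sg G f) = f" "lg G (lg G f) = f" "nu G (nu G f) = f"
    "sg G f \<noteq> f" "lg G f \<noteq> f" "nu G f \<noteq> f"
    "sg G (lg G f) = lg G (sg G f)" "sg G f \<noteq> lg G f"
  using assms unfolding ribbon_graph_def fpf_involution_def by auto

lemma rg_more:
  assumes "ribbon_graph G" "f \<in> flags G"
  shows "lg G (sg G (lg G f)) = sg G f" "sg G (lg G f) \<in> flags G"
    "sg G (lg G f) \<noteq> f" "sg G (lg G f) \<noteq> sg G f" "sg G (lg G f) \<noteq> lg G f"
proof -
  note b = rg_basic[OF assms]
  have lf: "lg G f \<in> flags G" by (rule b(2))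
  note bl = rg_basic[OF assms(1) lf]
  show 1: "lg G (sg G (lg G f)) = sg G f" using bl b by metis
  show "sg G (lg G f) \<in> flags G" using bl by simp
  show "sg G (lg G f) \<noteq> f" using b bl by metis
  show "sg G (lg G f) \<noteq> sg G f" using b bl by metis
  show "sg G (lg G f) \<noteq> lg G f" using bl by simp
qed

lemma lt3: "(k::nat) < 3 \<Longrightarrow> k = 0 \<or> k = 1 \<or> k = 2" by auto

lemma sel_facts:
  assumes "ribbon_graph G" "f \<in> flags G"
  shows "k < 3 \<Longrightarrow> sel G k f \<in> flags G"
    and "k < 3 \<Longrightarrow> sel G k (sel G k f) = f"
    and "i < 3 \<Longrightarrow> j < 3 \<Longrightarrow> i \<noteq> j \<Longrightarrow> sel G i (sel G j f) = sel G (3 - i - j) f"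
    and "k < 3 \<Longrightarrow> sel G k f \<noteq> f"
    and "i < 3 \<Longrightarrow> j < 3 \<Longrightarrow> i \<noteq> j \<Longrightarrow> sel G i f \<noteq> sel G j f"
    and "edge_of G f = {f, sel G 0 f, sel G 1 f, sel G 2 f}"
proof -
  note b = rg_basic[OF assms]
  note m = rg_more[OF assms]
  have sf: "sg G f \<in> flags G" by (rule b(1))
  have lf: "lg G f \<in> flags G" by (rule b(2))
  note bs = rg_basic[OF assms(1) sf]
  note bl = rg_basic[OF assms(1) lf]
  have s0: "sel G 0 x = sg G x" and s1: "sel G 1 x = lg G x" and s2: "sel G 2 x = sg G (lg G x)" for x
    by (simp_all add: sel_def)
  have in0: "sel G 0 f \<in> flags G" "sel G 1 f \<in> flags G" "sel G 2 f \<in> flags G"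
    using b(1,2) m(2) unfolding s0 s1 s2 by auto
  then show "k < 3 \<Longrightarrow> sel G k f \<in> flags G" by (auto dest!: lt3)
  have d0: "sel G 0 (sel G 0 f) = f" using b(4) unfolding s0 .
  have d1: "sel G 1 (sel G 1 f) = f" using b(5) unfolding s1 .
  have d2: "sel G 2 (sel G 2 f) = f" unfolding s2 using m(1) b(4) by simp
  from d0 d1 d2 show "k < 3 \<Longrightarrow> sel G k (sel G k f) = f" by (auto dest!: lt3)
  have c01: "sel G 0 (sel G 1 f) = sel G 2 f" unfolding s0 s1 s2 ..
  have c02: "sel G 0 (sel G 2 f) = sel G 1 f" unfolding s0 s1 s2 using bl(4) .
  have c10: "sel G 1 (sel G 0 f) = sel G 2 f" unfolding s0 s1 s2 using b(10) by simp
  have c12: "sel G 1 (sel G 2 f) = sel G 0 f" unfolding s0 s1 s2 using m(1) .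
  have c20: "sel G 2 (sel G 0 f) = sel G 1 f" unfolding s0 s1 s2 using b(10) bl(4) by metis
  have c21: "sel G 2 (sel G 1 f) = sel G 0 f" unfolding s0 s1 s2 using b(5) by simp
  show "i < 3 \<Longrightarrow> j < 3 \<Longrightarrow> i \<noteq> j \<Longrightarrow> sel G i (sel G j f) = sel G (3 - i - j) f"
    using c01 c02 c10 c12 c20 c21 by (auto dest!: lt3)
  have n0: "sel G 0 f \<noteq> f" "sel G 1 f \<noteq> f" "sel G 2 f \<noteq> f"
    using b(7,8) m(3) unfolding s0 s1 s2 by auto
  then show "k < 3 \<Longrightarrow> sel G k f \<noteq> f" by (auto dest!: lt3)
  have n1: "sel G 0 f \<noteq> sel G 1 f" "sel G 0 f \<noteq> sel G 2 f" "sel G 1 f \<noteq> sel G 2 f"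
    using b(11) m(4,5) unfolding s0 s1 s2 by auto
  then show "i < 3 \<Longrightarrow> j < 3 \<Longrightarrow> i \<noteq> j \<Longrightarrow> sel G i f \<noteq> sel G j f"
    by (auto dest!: lt3)
  show "edge_of G f = {f, sel G 0 f, sel G 1 f, sel G 2 f}" unfolding edge_of_def s0 s1 s2 ..
qed

lemma perm3: "i < 3 \<Longrightarrow> j < 3 \<Longrightarrow> i \<noteq> j \<Longrightarrow> {i, j, 3 - i - j} = {0, 1, 2::nat}"
  by (auto dest!: lt3)

lemma set4: "i < 3 \<Longrightarrow> j < 3 \<Longrightarrow> i \<noteq> j \<Longrightarrow> {x, g i, g j, g (3 - i - j)} = {x, g 0, g 1, g (2::nat)}"
proof -
  assume "i < 3" "j < 3" "i \<noteq> j"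
  then have "g ` {i, j, 3 - i - j} = g ` {0, 1, 2}" using perm3 by metis
  then show ?thesis by simp
qed

lemma edge_of_sel:
  assumes G: "ribbon_graph G" and f: "f \<in> flags G" and k: "k < 3"
  shows "edge_of G (sel G k f) = edge_of G f"
proof -
  have g: "sel G k f \<in> flags G" using sel_facts(1)[OF G f k] .
  have e1: "edge_of G (sel G k f) = {sel G k f, sel G 0 (sel G k f), sel G 1 (sel G k f), sel G 2 (sel G k f)}"
    using sel_facts(6)[OF G g] .
  note d = sel_facts(2)[OF G f] and c = sel_facts(3)[OF G f]
  have "k = 0 \<or> k = 1 \<or> k = 2" using k by auto
  then have "{sel G k f, sel G 0 (sel G k f), sel G 1 (sel G k f), sel G 2 (sel G k f)} = {f, sel G 0 f, sel G 1 f, sel G 2 f}"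
  proof (elim disjE)
    assume "k = 0" then show ?thesis using d[of 0] c[of 1 0] c[of 2 0] by auto
  next
    assume "k = 1" then show ?thesis using d[of 1] c[of 0 1] c[of 2 1] by auto
  next
    assume "k = 2" then show ?thesis using d[of 2] c[of 0 2] c[of 1 2] by auto
  qed
  then show ?thesis using e1 sel_facts(6)[OF G f] by simp
qed

lemma sel_in_edge:
  assumes "ribbon_graph G" "f \<in> flags G" "k < 3"
  shows "sel G k f \<in> edge_of G f"
proof -
  have "k = 0 \<or> k = 1 \<or> k = 2" using assms(3) by auto
  then show ?thesis unfolding sel_facts(6)[OF assms(1,2)] by blast
qed

lemma Valid_lt: "(i,j) \<in> Valid \<Longrightarrow> i < 3 \<and> j < 3 \<and> i \<noteq> j"
  unfolding Valid_def by auto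

definition eqv :: "'a ribbon \<Rightarrow> 'a ribbon \<Rightarrow> ('a set \<Rightarrow> nat \<times> nat) \<Rightarrow> bool" where
  "eqv H G c \<longleftrightarrow> flags H = flags G \<and> iso H = iso G \<and> nu H = nu G \<and>
     (\<forall>f\<in>flags G. sg H f = sel G (fst (c (edge_of G f))) f \<and> lg H f = sel G (snd (c (edge_of G f))) f)"

definition validc :: "'a ribbon \<Rightarrow> ('a set \<Rightarrow> nat \<times> nat) \<Rightarrow> bool" where
  "validc G c \<longleftrightarrow> (\<forall>e\<in>edges G. c e \<in> Valid)"

fun opst :: "rop \<Rightarrow> nat \<times> nat \<Rightarrow> nat \<times> nat" where
  "opst D (i,j) = (j,i)"
| "opst T (i,j) = (i, 3 - i - j)"

definition updop :: "rop \<Rightarrow> 'a set set \<Rightarrow> ('a set \<Rightarrow> nat \<times> nat) \<Rightarrow> ('a set \<Rightarrow> nat \<times> nat)" where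
  "updop w A c = (\<lambda>e. if e \<in> A then opst w (c e) else c e)"

fun updword :: "rop list \<Rightarrow> 'a set set \<Rightarrow> ('a set \<Rightarrow> nat \<times> nat) \<Rightarrow> ('a set \<Rightarrow> nat \<times> nat)" where
  "updword [] A c = c"
| "updword (w # ws) A c = updop w A (updword ws A c)"

fun updseq :: "(rop list \<times> 'a set set) list \<Rightarrow> ('a set \<Rightarrow> nat \<times> nat) \<Rightarrow> ('a set \<Rightarrow> nat \<times> nat)" where
  "updseq [] c = c"
| "updseq ((w, A) # rest) c = updseq rest (updword w A c)"

lemma opst_D[simp]: "opst D s = (snd s, fst s)" by (cases s) simp
lemma opst_T[simp]: "opst T s = (fst s, 3 - fst s - snd s)" by (cases s) simp

lemma opst_valid: "s \<in> Valid \<Longrightarrow> opst w s \<in> Valid"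
  unfolding Valid_def by (cases w; elim insertE emptyE; simp)

lemma validc_updop: "validc G c \<Longrightarrow> validc G (updop w A c)"
  unfolding validc_def updop_def using opst_valid by auto

lemma validc_updword: "validc G c \<Longrightarrow> validc G (updword ws A c)"
  by (induction ws) (auto simp: validc_updop)

lemma validc_updseq: "validc G c \<Longrightarrow> validc G (updseq ws c)"
  by (induction ws arbitrary: c) (auto simp: validc_updword)

lemma edge_in_edges: "f \<in> flags G \<Longrightarrow> edge_of G f \<in> edges G"
  unfolding edges_def by auto

lemma eqv_edge:
  assumes G: "ribbon_graph G" and v: "validc G c" and e: "eqv H G c" and f: "f \<in> flags G"
  shows "edge_of H f = edge_of G f"
proof -
  obtain i j where ij: "c (edge_of G f) = (i,j)" by fastforce
  have vij: "i < 3" "j < 3" "i \<noteq> j" using v ij edge_in_edges[OF f] Valid_lt unfolding validc_def by metis+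
  have g: "lg H f = sel G j f" using e f ij unfolding eqv_def by auto
  have gF: "sel G j f \<in> flags G" using sel_facts(1)[OF G f] vij by simp
  have "edge_of G (sel G j f) = edge_of G f" using edge_of_sel[OF G f] vij by simp
  then have "sg H (lg H f) = sel G i (sel G j f)" using g e gF ij unfolding eqv_def by auto
  also have "\<dots> = sel G (3 - i - j) f" using sel_facts(3)[OF G f] vij by simp
  finally have "edge_of H f = {f, sel G i f, sel G j f, sel G (3 - i - j) f}"
    unfolding edge_of_def using g e f ij unfolding eqv_def by auto
  also have "\<dots> = {f, sel G 0 f, sel G 1 f, sel G 2 f}"
    using set4[OF vij] .
  finally show ?thesis using sel_facts(6)[OF G f] by simp
qed

lemma eqv_op:
  assumes G: "ribbon_graph G" and v: "validc G c" and e: "eqv H G c"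
  shows "eqv (apply_op w A H) G (updop w A c)"
proof -
  have ed: "\<And>f. f \<in> flags G \<Longrightarrow> edge_of H f = edge_of G f" using eqv_edge[OF G v e] by blast
  show ?thesis
  proof (cases w)
    case D
    show ?thesis using e ed unfolding D eqv_def updop_def
      by (auto simp: pdual_def ppetrial_def split: prod.splits)
  next
    case T
    have key: "sg H (lg H f) = sel G (3 - fst (c (edge_of G f)) - snd (c (edge_of G f))) f"
      if f: "f \<in> flags G" for f
    proof -
      obtain i j where ij: "c (edge_of G f) = (i,j)" by fastforce
      have vij: "i < 3" "j < 3" "i \<noteq> j" using v ij edge_in_edges[OF f] Valid_lt unfolding validc_def by metis+
      have g: "lg H f = sel G j f" using e f ij unfolding eqv_def by auto
      have gF: "sel G j f \<in> flags G" using sel_facts(1)[OF G f] vij by simp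
      have "edge_of G (sel G j f) = edge_of G f" using edge_of_sel[OF G f] vij by simp
      then have "sg H (lg H f) = sel G i (sel G j f)" using g e gF ij unfolding eqv_def by auto
      also have "\<dots> = sel G (3 - i - j) f" using sel_facts(3)[OF G f] vij by simp
      finally show ?thesis using ij by simp
    qed
    show ?thesis using e ed key unfolding T eqv_def updop_def
      by (auto simp: pdual_def ppetrial_def split: prod.splits)
  qed
qed

lemma eqv_word:
  assumes G: "ribbon_graph G" and v: "validc G c" and e: "eqv H G c"
  shows "eqv (apply_word ws A H) G (updword ws A c)"
  by (induction ws) (auto simp: e eqv_op[OF G] validc_updword[OF v])

lemma eqv_seq:
  assumes G: "ribbon_graph G"
  shows "validc G c \<Longrightarrow> eqv H G c \<Longrightarrow> eqv (apply_seq ws H) G (updseq ws c)"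
proof (induction ws arbitrary: c H)
  case Nil then show ?case by simp
next
  case (Cons p ws)
  obtain w A where p: "p = (w, A)" by fastforce
  show ?case using Cons.IH[OF validc_updword[OF Cons.prems(1)] eqv_word[OF G Cons.prems]] p by simp
qed

lemma eqv_refl: "eqv G G (\<lambda>_. (0,1))"
  unfolding eqv_def sel_def by simp

lemma validc_refl: "validc G (\<lambda>_. (0,1))"
  unfolding validc_def Valid_def by simp

definition sig :: "'a ribbon \<Rightarrow> ('a set \<Rightarrow> nat \<times> nat) \<Rightarrow> 'a \<Rightarrow> 'a" where
  "sig G c f = sel G (fst (c (edge_of G f))) f"

definition NV :: "'a ribbon \<Rightarrow> ('a set \<Rightarrow> nat \<times> nat) \<Rightarrow> nat" where
  "NV G c = iso G + card (cls (flags G) (sig G c) (nu G))"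

lemma nv_eqv:
  assumes "eqv H G c"
  shows "nv H = NV G c"
proof -
  have "vrel H = VV (flags G) (sig G c) (nu G)"
    using assms unfolding vrel_def VV_def eqv_def sig_def by auto
  then have "vertices H = cls (flags G) (sig G c) (nu G)"
    using assms unfolding vertices_def cls_def eqv_def by auto
  then show ?thesis using assms unfolding nv_def NV_def eqv_def by simp
qed

lemma edges_eqv:
  assumes G: "ribbon_graph G" and v: "validc G c" and e: "eqv H G c"
  shows "edges H = edges G"
proof -
  have "flags H = flags G" using e unfolding eqv_def by simp
  then show ?thesis unfolding edges_def using eqv_edge[OF G v e] by (metis image_cong)
qed

lemma NV_cong:
  assumes "\<forall>e\<in>edges G. c e = c' e"
  shows "NV G c = NV G c'"
proof -
  have "sig G c f = sig G c' f" if "f \<in> flags G" for f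
    using assms edge_in_edges[OF that] unfolding sig_def by simp
  then have "VV (flags G) (sig G c) (nu G) = VV (flags G) (sig G c') (nu G)"
    unfolding VV_def by (metis (no_types, lifting))
  then show ?thesis unfolding NV_def cls_def by simp
qed


lemma sum_PiE_reindex:
  fixes g :: "('e \<Rightarrow> 's) \<Rightarrow> 'b::comm_monoid_add"
  assumes fin: "finite E" and bij: "\<forall>e\<in>E. bij_betw (\<phi> e) I S"
    and cong: "\<And>c c'. (\<forall>e\<in>E. c e = c' e) \<Longrightarrow> g c = g c'"
  shows "(\<Sum>p\<in>PiE E (\<lambda>_. I). g (\<lambda>e. \<phi> e (p e))) = (\<Sum>c\<in>PiE E (\<lambda>_. S). g c)"
proof -
  define h where "h = (\<lambda>p. restrict (\<lambda>e. \<phi> e (p e)) E)"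
  have hb: "bij_betw h (PiE E (\<lambda>_. I)) (PiE E (\<lambda>_. S))"
  proof (rule bij_betwI')
    fix p q assume p: "p \<in> PiE E (\<lambda>_. I)" and q: "q \<in> PiE E (\<lambda>_. I)"
    show "(h p = h q) = (p = q)"
    proof
      assume "h p = h q"
      then have "\<forall>e\<in>E. \<phi> e (p e) = \<phi> e (q e)" unfolding h_def by (metis restrict_apply')
      then have "\<forall>e\<in>E. p e = q e" using bij p q unfolding bij_betw_def inj_on_def by (meson PiE_mem)
      then show "p = q" using PiE_ext[OF p q] by blast
    qed simp
  next
    fix p assume p: "p \<in> PiE E (\<lambda>_. I)"
    show "h p \<in> PiE E (\<lambda>_. S)" unfolding h_def using p bij unfolding bij_betw_def by auto
  next
    fix c assume c: "c \<in> PiE E (\<lambda>_. S)"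
    define p where "p = restrict (\<lambda>e. inv_into I (\<phi> e) (c e)) E"
    have "\<forall>e\<in>E. inv_into I (\<phi> e) (c e) \<in> I" using c bij by (metis PiE_mem bij_betw_def inv_into_into)
    then have pI: "p \<in> PiE E (\<lambda>_. I)" unfolding p_def by auto
    have "h p = c"
    proof (rule PiE_ext[OF _ c])
      show "h p \<in> PiE E (\<lambda>_. S)" unfolding h_def using pI bij unfolding bij_betw_def by auto
      fix e assume "e \<in> E"
      then have "c e \<in> \<phi> e ` I" using c bij by (metis PiE_mem bij_betw_def)
      then show "h p e = c e" unfolding h_def p_def using \<open>e \<in> E\<close> by (simp add: f_inv_into_f)
    qed
    then show "\<exists>p\<in>PiE E (\<lambda>_. I). c = h p" using pI by auto
  qed
  have "(\<Sum>c\<in>PiE E (\<lambda>_. S). g c) = (\<Sum>p\<in>PiE E (\<lambda>_. I). g (h p))"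
    using sum.reindex_bij_betw[OF hb, of g] by simp
  also have "\<dots> = (\<Sum>p\<in>PiE E (\<lambda>_. I). g (\<lambda>e. \<phi> e (p e)))"
    by (rule sum.cong) (auto intro!: cong simp: h_def)
  finally show ?thesis by simp
qed

lemma sum_Pow_reindex:
  fixes g :: "('e \<Rightarrow> 's) \<Rightarrow> 'b::comm_monoid_add"
  assumes fin: "finite E" and ph: "\<forall>e\<in>E. \<phi> e True \<noteq> \<phi> e False \<and> {\<phi> e True, \<phi> e False} = S"
    and cong: "\<And>c c'. (\<forall>e\<in>E. c e = c' e) \<Longrightarrow> g c = g c'"
  shows "(\<Sum>B\<in>Pow E. g (\<lambda>e. \<phi> e (e \<in> B))) = (\<Sum>c\<in>PiE E (\<lambda>_. S). g c)"
proof -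
  define h where "h = (\<lambda>B. restrict (\<lambda>e. \<phi> e (e \<in> B)) E)"
  have phS: "\<phi> e b \<in> S" if "e \<in> E" for e b
  proof -
    have "{\<phi> e True, \<phi> e False} = S" using ph that by blast
    then show "\<phi> e b \<in> S" by (cases b) auto
  qed
  have hb: "bij_betw h (Pow E) (PiE E (\<lambda>_. S))"
  proof (rule bij_betwI')
    fix B B' assume B: "B \<in> Pow E" and B': "B' \<in> Pow E"
    show "(h B = h B') = (B = B')"
    proof
      assume "h B = h B'"
      then have "\<forall>e\<in>E. \<phi> e (e \<in> B) = \<phi> e (e \<in> B')"
      proof (intro ballI)
        fix e assume "h B = h B'" "e \<in> E"
        then have "h B e = h B' e" by simp
        then show "\<phi> e (e \<in> B) = \<phi> e (e \<in> B')" using \<open>e \<in> E\<close> by (simp add: h_def)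
      qed
      then have "\<forall>e\<in>E. (e \<in> B) = (e \<in> B')"
      proof (intro ballI)
        fix e assume e: "e \<in> E" and h: "\<forall>e\<in>E. \<phi> e (e \<in> B) = \<phi> e (e \<in> B')"
        show "(e \<in> B) = (e \<in> B')"
        proof -
          have "\<phi> e True \<noteq> \<phi> e False" using ph e by blast
          then show ?thesis using h[rule_format, OF e] by (cases "e \<in> B"; cases "e \<in> B'") simp_all
        qed
      qed
      then show "B = B'" using B B' by blast
    qed simp
  next
    fix B assume "B \<in> Pow E"
    show "h B \<in> PiE E (\<lambda>_. S)" unfolding h_def using phS by auto
  next
    fix c assume c: "c \<in> PiE E (\<lambda>_. S)"
    define B where "B = {e \<in> E. c e = \<phi> e True}"
    have "h B = c"
    proof (rule PiE_ext[OF _ c])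
    show "h B \<in> PiE E (\<lambda>_. S)" unfolding h_def using phS by auto
      fix e assume e: "e \<in> E"
      then have "c e \<in> S" using c by auto
      then have "c e = \<phi> e True \<or> c e = \<phi> e False" using ph e by blast
      then show "h B e = c e" unfolding h_def B_def using e ph by auto
    qed
    moreover have "B \<in> Pow E" unfolding B_def by auto
    ultimately show "\<exists>B\<in>Pow E. c = h B" by metis
  qed
  have "(\<Sum>c\<in>PiE E (\<lambda>_. S). g c) = (\<Sum>B\<in>Pow E. g (h B))"
    using sum.reindex_bij_betw[OF hb, of g] by simp
  also have "\<dots> = (\<Sum>B\<in>Pow E. g (\<lambda>e. \<phi> e (e \<in> B)))"
    by (rule sum.cong) (auto intro!: cong simp: h_def)
  finally show ?thesis by simp
qed

lemma poly_sum_monom1: "poly (\<Sum>x\<in>I. monom (1::int) (k x)) 1 = int (card I)"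
  by (simp add: poly_sum poly_monom)

lemma coeff_sum_monom1: "finite I \<Longrightarrow> coeff (\<Sum>x\<in>I. monom (1::int) (k x)) n = int (card {x \<in> I. k x = n})"
  by (simp add: coeff_sum coeff_monom sum.inter_filter[symmetric])


definition Q :: "'a ribbon \<Rightarrow> (nat \<times> nat) set \<Rightarrow> int poly" where
  "Q G S = (\<Sum>c\<in>PiE (edges G) (\<lambda>_. S). monom 1 (NV G c))"

lemma fin_edges: "ribbon_graph G \<Longrightarrow> finite (edges G)"
  unfolding ribbon_graph_def edges_def by simp

lemma edge_mem:
  assumes G: "ribbon_graph G" and f: "f \<in> flags G" and x: "x \<in> edge_of G f"
  shows "x \<in> flags G \<and> edge_of G x = edge_of G f"
proof -
  have "x = f \<or> x = sel G 0 f \<or> x = sel G 1 f \<or> x = sel G 2 f" using x sel_facts(6)[OF G f] by blast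
  then show ?thesis using f sel_facts(1)[OF G f] edge_of_sel[OF G f] by auto
qed

lemma self_in_edge: "f \<in> edge_of G f" unfolding edge_of_def by simp

lemma sig_fpf:
  assumes G: "ribbon_graph G" and v: "validc G c"
  shows "fpf_involution (flags G) (sig G c)"
  unfolding fpf_involution_def
proof
  fix f assume f: "f \<in> flags G"
  obtain i j where ij: "c (edge_of G f) = (i,j)" by fastforce
  have vij: "i < 3" using v ij edge_in_edges[OF f] Valid_lt unfolding validc_def by metis
  have s: "sig G c f = sel G i f" unfolding sig_def using ij by simp
  have e: "edge_of G (sel G i f) = edge_of G f" using edge_of_sel[OF G f vij] .
  have ss0: "sig G c (sel G i f) = sel G i (sel G i f)" unfolding sig_def e ij by simp
  have ss: "sig G c (sig G c f) = sel G i (sel G i f)" using ss0 s by simp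
  show "sig G c f \<in> flags G \<and> sig G c (sig G c f) = f \<and> sig G c f \<noteq> f"
    using s ss sel_facts(1,2,4)[OF G f vij] by simp
qed

lemma nu_fpf: "ribbon_graph G \<Longrightarrow> fpf_involution (flags G) (nu G)"
  unfolding ribbon_graph_def by simp

lemma fin_cls: "finite F \<Longrightarrow> finite (cls F s n)"
proof -
  assume "finite F"
  moreover have "cls F s n = (\<lambda>f. (VV F s n)\<^sup>* `` {f}) ` F" unfolding cls_def by auto
  ultimately show ?thesis by simp
qed

lemma NV_ge1:
  assumes G: "ribbon_graph G" and con: "connected_rg G"
  shows "NV G c \<ge> 1"
proof (cases "flags G = {}")
  case True
  then show ?thesis using con unfolding connected_rg_def NV_def by auto
next
  case False
  then obtain f where f: "f \<in> flags G" by blast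
  have fin: "finite (flags G)" using G unfolding ribbon_graph_def by simp
  have "cls (flags G) (sig G c) (nu G) \<noteq> {}" using f unfolding cls_def by blast
  then have "card (cls (flags G) (sig G c) (nu G)) \<ge> 1" using fin_cls[OF fin]
    by (simp add: Suc_le_eq card_gt_0_iff)
  then show ?thesis unfolding NV_def by simp
qed

lemma NV_step:
  assumes G: "ribbon_graph G" and con: "connected_rg G" and v: "validc G c" and gt: "NV G c > 1"
  shows "\<exists>e\<in>edges G. \<forall>s'\<in>Valid. fst s' \<noteq> fst (c e) \<longrightarrow> NV G (c(e := s')) = NV G c - 1"
proof -
  define F where "F = flags G"
  define \<sigma> where "\<sigma> = sig G c"
  define n where "n = nu G"
  define R where "R = (VV F \<sigma> n)\<^sup>*"
  have fin: "finite F" using G unfolding ribbon_graph_def F_def by simp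
  have sfpf: "fpf_involution F \<sigma>" using sig_fpf[OF G v] F_def \<sigma>_def by simp
  have nfpf: "fpf_involution F n" using nu_fpf[OF G] F_def n_def by simp
  have symV: "sym (VV F \<sigma> n)" using VV_sym[OF sfpf nfpf] .
  have Fne: "F \<noteq> {}"
  proof
    assume "F = {}"
    then have "iso G = 1" using con unfolding connected_rg_def F_def by blast
    moreover have "cls F \<sigma> n = {}" unfolding cls_def using \<open>F = {}\<close> by simp
    ultimately show False using gt unfolding NV_def F_def \<sigma>_def n_def by simp
  qed
  have iso0: "iso G = 0" using con Fne unfolding connected_rg_def F_def by blast
  have ex: "\<exists>a\<in>F. \<exists>y\<in>edge_of G a. (a,y) \<notin> R"
  proof (rule ccontr)
    assume "\<not> ?thesis"
    then have all: "\<forall>a\<in>F. \<forall>y\<in>edge_of G a. (a,y) \<in> R" by blast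
    have "allrel G \<subseteq> R"
    proof
      fix p assume "p \<in> allrel G"
      then obtain u where u: "u \<in> F" and p: "p = (u, sg G u) \<or> p = (u, nu G u) \<or> p = (u, lg G u)"
        unfolding allrel_def vrel_def F_def by blast
      have "(u, nu G u) \<in> VV F \<sigma> n" unfolding VV_def n_def using u by blast
      moreover have "sg G u \<in> edge_of G u" "lg G u \<in> edge_of G u" unfolding edge_of_def by auto
      ultimately show "p \<in> R" using p all u unfolding R_def by blast
    qed
    then have sub: "(allrel G)\<^sup>* \<subseteq> R" unfolding R_def by (metis rtrancl_idemp rtrancl_mono)
    obtain f0 where f0: "f0 \<in> F" using Fne by blast
    have "\<forall>f\<in>F. (f0, f) \<in> (allrel G)\<^sup>*" using con Fne f0 unfolding connected_rg_def F_def by blast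
    then have eqc: "R `` {f} = R `` {f0}" if "f \<in> F" for f
    proof -
      have "(f0, f) \<in> R" using sub that \<open>\<forall>f\<in>F. (f0, f) \<in> (allrel G)\<^sup>*\<close> by blast
      then show ?thesis using rt_eq_class[OF symV, of f0 f] unfolding R_def by simp
    qed
    have "cls F \<sigma> n = {R `` {f} | f. f \<in> F}" unfolding cls_def R_def by simp
    also have "\<dots> = {R `` {f0}}" using f0 eqc by blast
    finally have "cls F \<sigma> n = {R `` {f0}}" .
    then show False using gt iso0 unfolding NV_def F_def \<sigma>_def n_def by simp
  qed
  then obtain a y where aF: "a \<in> F" and ye: "y \<in> edge_of G a" and ay: "(a,y) \<notin> R" by blast
  define e where "e = edge_of G a"
  have eE: "e \<in> edges G" using edge_in_edges[of a G] aF unfolding e_def F_def by simp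
  obtain i j where ij: "c e = (i,j)" by fastforce
  have "(i,j) \<in> Valid" using v eE ij unfolding validc_def by metis
  then have vij: "i < 3" "j < 3" "i \<noteq> j" using Valid_lt by auto
  have aF': "a \<in> flags G" using aF F_def by simp
  have sa: "\<sigma> a = sel G i a" unfolding \<sigma>_def sig_def using ij e_def by simp
  have "y \<noteq> a" using ay unfolding R_def by auto
  moreover have "y \<noteq> sel G i a"
  proof
    assume "y = sel G i a"
    then have "(a,y) \<in> VV F \<sigma> n" using sa aF unfolding VV_def by auto
    then show False using ay unfolding R_def by auto
  qed
  moreover have "y = a \<or> y = sel G 0 a \<or> y = sel G 1 a \<or> y = sel G 2 a"
    using ye sel_facts(6)[OF G aF'] by blast
  ultimately obtain k where k: "k < 3" "k \<noteq> i" "y = sel G k a"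
  proof -
    assume that: "\<And>k. k < 3 \<Longrightarrow> k \<noteq> i \<Longrightarrow> y = sel G k a \<Longrightarrow> thesis"
    assume "y \<noteq> a" "y \<noteq> sel G i a" "y = a \<or> y = sel G 0 a \<or> y = sel G 1 a \<or> y = sel G 2 a"
    then show thesis using that[of 0] that[of 1] that[of 2] by fastforce
  qed
  have yedge: "edge_of G y = e" using edge_of_sel[OF G aF' k(1)] k(3) e_def by simp
  have yF: "y \<in> F" using sel_facts(1)[OF G aF' k(1)] k(3) F_def by simp
  have sy: "\<sigma> y = sel G (3 - i - k) a"
  proof -
    have "\<sigma> y = sel G i y" unfolding \<sigma>_def sig_def using yedge ij by simp
    also have "\<dots> = sel G (3 - i - k) a" using sel_facts(3)[OF G aF' vij(1) k(1)] k by simp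
    finally show ?thesis .
  qed
  have eset: "{a, \<sigma> a, y, \<sigma> y} = e"
  proof -
    have "{a, \<sigma> a, y, \<sigma> y} = {a, sel G i a, sel G k a, sel G (3 - i - k) a}" using sa sy k by simp
    also have "\<dots> = {a, sel G 0 a, sel G 1 a, sel G 2 a}"
      using set4[of i k a "\<lambda>m. sel G m a"] vij(1) k by simp
    finally show ?thesis using sel_facts(6)[OF G aF'] e_def by simp
  qed
  show ?thesis
  proof (intro bexI[OF _ eE] ballI impI)
    fix s' assume s'V: "s' \<in> Valid" and s'i: "fst s' \<noteq> fst (c e)"
    obtain i' j' where ij': "s' = (i', j')" by fastforce
    have vij': "i' < 3" "i' \<noteq> i" using s'V s'i ij ij' Valid_lt by auto
    define c' where "c' = c(e := s')"
    define \<sigma>' where "\<sigma>' = sig G c'"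
    have v': "validc G c'" using v s'V unfolding validc_def c'_def by auto
    have s'fpf: "fpf_involution F \<sigma>'" using sig_fpf[OF G v'] F_def \<sigma>'_def by simp
    have inE: "\<And>x. x \<in> e \<Longrightarrow> x \<in> F \<and> edge_of G x = e"
      using edge_mem[OF G aF'] e_def F_def by blast
    have s'x: "\<sigma>' x = sel G i' x" if "x \<in> e" for x
      using inE[OF that] ij' unfolding \<sigma>'_def sig_def c'_def by simp
    have "i' = k \<or> i' = 3 - i - k" using vij' vij(1) k(1,2) by (auto dest!: lt3)
    then have s'a: "\<sigma>' a \<in> {y, \<sigma> y}" using s'x[of a] self_in_edge[of a G] e_def k(3) sy by auto
    have s'in: "\<forall>x\<in>{a, \<sigma> a, y, \<sigma> y}. \<sigma>' x \<in> {a, \<sigma> a, y, \<sigma> y}"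
    proof
      fix x assume "x \<in> {a, \<sigma> a, y, \<sigma> y}"
      then have xe: "x \<in> e" using eset by simp
      then have "x \<in> flags G" "edge_of G x = e" using inE F_def by auto
      then have "sel G i' x \<in> e" using sel_in_edge[OF G _ vij'(1)] by metis
      then show "\<sigma>' x \<in> {a, \<sigma> a, y, \<sigma> y}" using s'x[OF xe] eset by simp
    qed
    have same: "\<forall>x\<in>F - {a, \<sigma> a, y, \<sigma> y}. \<sigma>' x = \<sigma> x"
    proof
      fix x assume "x \<in> F - {a, \<sigma> a, y, \<sigma> y}"
      then have "x \<notin> e" using eset by simp
      then have "edge_of G x \<noteq> e" using self_in_edge[of x G] by auto
      then show "\<sigma>' x = \<sigma> x" unfolding \<sigma>'_def \<sigma>_def sig_def c'_def by simp
    qed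
    have m: "card (cls F \<sigma>' n) = card (cls F \<sigma> n) - 1"
      using merge[OF fin sfpf s'fpf nfpf aF yF] ay s'a s'in same unfolding R_def by blast
    then show "NV G (c(e := s')) = NV G c - 1"
      unfolding NV_def using iso0 c'_def \<sigma>'_def \<sigma>_def F_def n_def by simp
  qed
qed


lemma Q_interp:
  assumes G: "ribbon_graph G" and con: "connected_rg G" and SV: "S \<subseteq> Valid" and Sne: "S \<noteq> {}"
    and Sch: "\<forall>s\<in>S. \<exists>s'\<in>S. fst s' \<noteq> fst s"
  shows "mindeg1_interpolating (Q G S)"
proof -
  define C where "C = PiE (edges G) (\<lambda>_. S)"
  have finS: "finite S" using SV finite_subset unfolding Valid_def by blast
  have finC: "finite C" unfolding C_def using fin_edges[OF G] finS by (simp add: finite_PiE)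
  have Cne: "C \<noteq> {}" unfolding C_def using Sne by (simp add: PiE_eq_empty_iff)
  have vC: "validc G c" if "c \<in> C" for c using that SV unfolding C_def validc_def by auto
  have coef: "coeff (Q G S) k = int (card {c \<in> C. NV G c = k})" for k
    unfolding Q_def C_def[symmetric] using coeff_sum_monom1[OF finC] by simp
  have ach: "coeff (Q G S) k \<noteq> 0 \<longleftrightarrow> (\<exists>c\<in>C. NV G c = k)" for k
  proof -
    have "finite {c \<in> C. NV G c = k}" using finC by simp
    then show ?thesis unfolding coef by auto
  qed
  have ge1: "\<forall>c\<in>C. NV G c \<ge> 1" using NV_ge1[OF G con] by blast
  have down: "\<exists>c'\<in>C. NV G c' = NV G c - 1" if c: "c \<in> C" and gt: "NV G c > 1" for c
  proof -
    obtain e where eE: "e \<in> edges G" and st: "\<forall>s'\<in>Valid. fst s' \<noteq> fst (c e) \<longrightarrow> NV G (c(e := s')) = NV G c - 1"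
      using NV_step[OF G con vC[OF c] gt] by blast
    have "c e \<in> S" using c eE unfolding C_def by auto
    then obtain s' where s': "s' \<in> S" "fst s' \<noteq> fst (c e)" using Sch by blast
    have "c(e := s') \<in> C" using c eE s'(1) unfolding C_def by (auto simp: PiE_def Pi_def extensional_def)
    moreover have "NV G (c(e := s')) = NV G c - 1" using st s' SV by blast
    ultimately show ?thesis by blast
  qed
  have allk: "\<forall>k. 1 \<le> k \<and> k \<le> m \<longrightarrow> (\<exists>c\<in>C. NV G c = k)" if "\<exists>c\<in>C. NV G c = m" for m
    using that
  proof (induction m)
    case 0 then show ?case by simp
  next
    case (Suc m)
    then obtain c where c: "c \<in> C" "NV G c = Suc m" by blast
    show ?case
    proof (cases "m = 0")
      case True then show ?thesis using Suc.prems by (auto simp: le_Suc_eq)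
    next
      case False
      then obtain c' where "c' \<in> C" "NV G c' = m" using down[OF c(1)] c(2) by force
      then have "\<forall>k. 1 \<le> k \<and> k \<le> m \<longrightarrow> (\<exists>c\<in>C. NV G c = k)" using Suc.IH by blast
      then show ?thesis using Suc.prems by (auto simp: le_Suc_eq)
    qed
  qed
  obtain c0 where c0: "c0 \<in> C" using Cne by blast
  have "coeff (Q G S) (NV G c0) \<noteq> 0" using ach c0 by blast
  then have Qne: "Q G S \<noteq> 0" by auto
  then have "coeff (Q G S) (degree (Q G S)) \<noteq> 0" by simp
  then have degach: "\<exists>c\<in>C. NV G c = degree (Q G S)" using ach by blast
  then have deg1: "degree (Q G S) \<ge> 1" using ge1 by auto
  have "\<not> (\<exists>c\<in>C. NV G c = 0)" using ge1 by fastforce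
  then have c0z: "coeff (Q G S) 0 = 0" using ach by blast
  have interp: "\<forall>k. 1 \<le> k \<and> k \<le> degree (Q G S) \<longrightarrow> coeff (Q G S) k \<noteq> 0"
    using allk[OF degach] ach by blast
  show ?thesis unfolding mindeg1_interpolating_def using c0z interp deg1 by auto
qed

fun wordst :: "rop list \<Rightarrow> nat \<times> nat \<Rightarrow> nat \<times> nat" where
  "wordst [] s = s"
| "wordst (w # ws) s = opst w (wordst ws s)"

lemma updword_apply: "updword ws A c e = (if e \<in> A then wordst ws (c e) else c e)"
  by (induction ws) (auto simp: updop_def)

lemma part_eqv:
  assumes "edges H = edges G" shows "part H p = part G p"
  using assms unfolding part_def by auto

definition W6 :: "rop list list" where
  "W6 = [[], [D], [T], [T, D], [D, T], [T, D, T]]"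

definition W3 :: "rop list list" where
  "W3 = [[], [T, D], [D, T]]"

lemma lt6: "(k::nat) < 6 \<Longrightarrow> k = 0 \<or> k = 1 \<or> k = 2 \<or> k = 3 \<or> k = 4 \<or> k = 5" by auto

lemma cfg_dT:
  assumes "e \<in> edges G" "p e < 6"
  shows "updseq [([], part G p 0), ([D], part G p 1), ([T], part G p 2),
                 ([T, D], part G p 3), ([D, T], part G p 4), ([T, D, T], part G p 5)] c e
         = wordst (W6 ! p e) (c e)"
  using lt6[OF assms(2)] assms(1) by (elim disjE) (simp_all add: updop_def part_def W6_def)

lemma cfg_dt:
  assumes "e \<in> edges G" "p e < 3"
  shows "updseq [([], part G p 0), ([T, D], part G p 1), ([D, T], part G p 2)] c e
         = wordst (W3 ! p e) (c e)"
  using lt3[OF assms(2)] assms(1) by (elim disjE) (simp_all add: updop_def part_def W3_def)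


definition Sd :: "(nat \<times> nat) set" where "Sd = {(0,1),(1,0)}"
definition St :: "(nat \<times> nat) set" where "St = {(0,1),(2,1)}"
definition S3 :: "(nat \<times> nat) set" where "S3 = {(0,1),(1,2),(2,0)}"

lemma lessThan6: "{..<6::nat} = {0,1,2,3,4,5}" by auto
lemma lessThan3: "{..<3::nat} = {0,1,2}" by auto

lemma bij6:
  assumes "s \<in> Valid"
  shows "bij_betw (\<lambda>k. wordst (W6 ! k) s) {..<6} Valid"
  using assms unfolding Valid_def lessThan6
  by (elim insertE emptyE) (simp_all add: bij_betw_def W6_def insert_commute)

lemma bij3:
  assumes "s \<in> S3"
  shows "bij_betw (\<lambda>k. wordst (W3 ! k) s) {..<3} S3"
  using assms unfolding S3_def lessThan3
  by (elim insertE emptyE) (simp_all add: bij_betw_def W3_def insert_commute)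

lemma NV_cong_monom:
  "(\<forall>e\<in>edges G. c e = c' e) \<Longrightarrow> monom (1::int) (NV G c) = monom 1 (NV G c')"
  using NV_cong by metis

lemma PdT_gen:
  assumes G: "ribbon_graph G" and v: "validc G c0" and e: "eqv H G c0"
  shows "P_dT H = Q G Valid"
proof -
  have EH: "edges H = edges G" using edges_eqv[OF G v e] .
  have pt: "part H p = part G p" for p using part_eqv[OF EH] .
  have op: "opartitions H 6 = PiE (edges G) (\<lambda>_. {..<6})" unfolding opartitions_def EH ..
  have nvp: "nv (G_dT H p) = NV G (\<lambda>e. wordst (W6 ! p e) (c0 e))"
    if p: "p \<in> PiE (edges G) (\<lambda>_. {..<6})" for p
  proof -
    have "eqv (G_dT H p) G (updseq [([], part G p 0), ([D], part G p 1), ([T], part G p 2),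
                 ([T, D], part G p 3), ([D, T], part G p 4), ([T, D, T], part G p 5)] c0)"
      unfolding G_dT_def pt using eqv_seq[OF G v e] .
    then have "nv (G_dT H p) = NV G (updseq [([], part G p 0), ([D], part G p 1), ([T], part G p 2),
                 ([T, D], part G p 3), ([D, T], part G p 4), ([T, D, T], part G p 5)] c0)"
      by (rule nv_eqv)
    also have "\<dots> = NV G (\<lambda>e. wordst (W6 ! p e) (c0 e))"
      by (rule NV_cong) (use p cfg_dT[of _ G p c0] in \<open>auto simp: PiE_iff\<close>)
    finally show ?thesis .
  qed
  have "P_dT H = (\<Sum>p\<in>PiE (edges G) (\<lambda>_. {..<6}). monom 1 (NV G (\<lambda>e. wordst (W6 ! p e) (c0 e))))"
    unfolding P_dT_def op using nvp by (intro sum.cong) auto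
  also have "\<dots> = Q G Valid" unfolding Q_def
    by (rule sum_PiE_reindex[OF fin_edges[OF G], where \<phi> = "\<lambda>e k. wordst (W6 ! k) (c0 e)"])
       (use v bij6 NV_cong_monom in \<open>auto simp: validc_def\<close>)
  finally show ?thesis .
qed

lemma Pdt_gen:
  assumes G: "ribbon_graph G" and v: "validc G c0" and e: "eqv H G c0" and s3: "\<forall>e\<in>edges G. c0 e \<in> S3"
  shows "P_dt H = Q G S3"
proof -
  have EH: "edges H = edges G" using edges_eqv[OF G v e] .
  have pt: "part H p = part G p" for p using part_eqv[OF EH] .
  have op: "opartitions H 3 = PiE (edges G) (\<lambda>_. {..<3})" unfolding opartitions_def EH ..
  have nvp: "nv (G_dt H p) = NV G (\<lambda>e. wordst (W3 ! p e) (c0 e))"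
    if p: "p \<in> PiE (edges G) (\<lambda>_. {..<3})" for p
  proof -
    have "eqv (G_dt H p) G (updseq [([], part G p 0), ([T, D], part G p 1), ([D, T], part G p 2)] c0)"
      unfolding G_dt_def pt using eqv_seq[OF G v e] .
    then have "nv (G_dt H p) = NV G (updseq [([], part G p 0), ([T, D], part G p 1), ([D, T], part G p 2)] c0)"
      by (rule nv_eqv)
    also have "\<dots> = NV G (\<lambda>e. wordst (W3 ! p e) (c0 e))"
      by (rule NV_cong) (use p cfg_dt[of _ G p c0] in \<open>auto simp: PiE_iff\<close>)
    finally show ?thesis .
  qed
  have "P_dt H = (\<Sum>p\<in>PiE (edges G) (\<lambda>_. {..<3}). monom 1 (NV G (\<lambda>e. wordst (W3 ! p e) (c0 e))))"
    unfolding P_dt_def op using nvp by (intro sum.cong) auto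
  also have "\<dots> = Q G S3" unfolding Q_def
    by (rule sum_PiE_reindex[OF fin_edges[OF G], where \<phi> = "\<lambda>e k. wordst (W3 ! k) (c0 e)"])
       (use s3 bij3 NV_cong_monom in auto)
  finally show ?thesis .
qed

lemma Pd_gen:
  assumes G: "ribbon_graph G" and v: "validc G c0" and e: "eqv H G c0" and sd: "\<forall>e\<in>edges G. c0 e \<in> Sd"
  shows "P_d H = Q G Sd"
proof -
  have EH: "edges H = edges G" using edges_eqv[OF G v e] .
  have nvp: "nv (apply_word [D] A H) = NV G (\<lambda>e. (\<lambda>b. if b then opst D (c0 e) else c0 e) (e \<in> A))" for A
  proof -
    have "eqv (apply_word [D] A H) G (updword [D] A c0)" using eqv_word[OF G v e] .
    then have "nv (apply_word [D] A H) = NV G (updword [D] A c0)" by (rule nv_eqv)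
    also have "updword [D] A c0 = (\<lambda>e. (\<lambda>b. if b then opst D (c0 e) else c0 e) (e \<in> A))"
      by (simp add: updop_def)
    finally show ?thesis .
  qed
  have ph: "\<forall>e\<in>edges G. (\<lambda>b. if b then opst D (c0 e) else c0 e) True \<noteq> (\<lambda>b. if b then opst D (c0 e) else c0 e) False
      \<and> {(\<lambda>b. if b then opst D (c0 e) else c0 e) True, (\<lambda>b. if b then opst D (c0 e) else c0 e) False} = Sd"
  proof
    fix e assume "e \<in> edges G"
    then have "c0 e = (0,1) \<or> c0 e = (1,0)" using sd unfolding Sd_def by blast
    then show "(\<lambda>b. if b then opst D (c0 e) else c0 e) True \<noteq> (\<lambda>b. if b then opst D (c0 e) else c0 e) False
      \<and> {(\<lambda>b. if b then opst D (c0 e) else c0 e) True, (\<lambda>b. if b then opst D (c0 e) else c0 e) False} = Sd"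
      unfolding Sd_def by (elim disjE) (simp_all add: insert_commute)
  qed
  have "P_d H = (\<Sum>A\<in>Pow (edges G). monom 1 (NV G (\<lambda>e. (\<lambda>b. if b then opst D (c0 e) else c0 e) (e \<in> A))))"
    unfolding P_d_def EH nvp ..
  also have "\<dots> = Q G Sd" unfolding Q_def
    by (rule sum_Pow_reindex[OF fin_edges[OF G] ph]) (use NV_cong_monom in auto)
  finally show ?thesis .
qed

lemma Ptdt_gen:
  assumes G: "ribbon_graph G" and v: "validc G c0" and e: "eqv H G c0" and st: "\<forall>e\<in>edges G. c0 e \<in> St"
  shows "P_tdt H = Q G St"
proof -
  have EH: "edges H = edges G" using edges_eqv[OF G v e] .
  define \<phi> where "\<phi> = (\<lambda>e b. if b then opst T (opst D (opst T (c0 e))) else c0 e)"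
  have nvp: "nv (apply_word [T, D, T] A H) = NV G (\<lambda>e. \<phi> e (e \<in> A))" for A
  proof -
    have "eqv (apply_word [T, D, T] A H) G (updword [T, D, T] A c0)" using eqv_word[OF G v e] .
    then have "nv (apply_word [T, D, T] A H) = NV G (updword [T, D, T] A c0)" by (rule nv_eqv)
    also have "updword [T, D, T] A c0 = (\<lambda>e. \<phi> e (e \<in> A))"
      by (simp add: updop_def \<phi>_def fun_eq_iff)
    finally show ?thesis .
  qed
  have ph: "\<forall>e\<in>edges G. \<phi> e True \<noteq> \<phi> e False \<and> {\<phi> e True, \<phi> e False} = St"
  proof
    fix e assume "e \<in> edges G"
    then have "c0 e = (0,1) \<or> c0 e = (2,1)" using st unfolding St_def by blast
    then show "\<phi> e True \<noteq> \<phi> e False \<and> {\<phi> e True, \<phi> e False} = St"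
      unfolding St_def \<phi>_def by (elim disjE) (simp_all add: insert_commute)
  qed
  have "P_tdt H = (\<Sum>A\<in>Pow (edges G). monom 1 (NV G (\<lambda>e. \<phi> e (e \<in> A))))"
    unfolding P_tdt_def EH nvp ..
  also have "\<dots> = Q G St" unfolding Q_def
    by (rule sum_Pow_reindex[OF fin_edges[OF G] ph]) (use NV_cong_monom in auto)
  finally show ?thesis .
qed

theorem mainTheorem5:
  fixes G :: "'a ribbon"
  assumes "ribbon_graph G" and "connected_rg G"
  shows "poly (P_d G) 1 = 2 ^ ne G \<and> poly (P_tdt G) 1 = 2 ^ ne G
       \<and> poly (P_dt G) 1 = 3 ^ ne G \<and> poly (P_dT G) 1 = 6 ^ ne G
       \<and> (\<forall>H\<in>Orb_d G. P_d G = P_d H) \<and> (\<forall>H\<in>Orb_dt G. P_dt G = P_dt H)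
       \<and> (\<forall>H\<in>Orb_tdt G. P_tdt G = P_tdt H) \<and> (\<forall>H\<in>Orb_dT G. P_dT G = P_dT H)
       \<and> mindeg1_interpolating (P_d G) \<and> mindeg1_interpolating (P_dt G)
       \<and> mindeg1_interpolating (P_tdt G) \<and> mindeg1_interpolating (P_dT G)"
proof -
  note G = assms(1) and con = assms(2)
  define base where "base = (\<lambda>_::'a set. (0::nat, 1::nat))"
  have vb: "validc G base" using validc_refl base_def by simp
  have eb: "eqv G G base" using eqv_refl base_def by simp
  have fin: "finite (edges G)" using fin_edges[OF G] .
  have PdG: "P_d G = Q G Sd" using Pd_gen[OF G vb eb] by (simp add: base_def Sd_def)
  have PtG: "P_tdt G = Q G St" using Ptdt_gen[OF G vb eb] by (simp add: base_def St_def)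
  have P3G: "P_dt G = Q G S3" using Pdt_gen[OF G vb eb] by (simp add: base_def S3_def)
  have P6G: "P_dT G = Q G Valid" using PdT_gen[OF G vb eb] .
  have cardO: "card (opartitions G k) = k ^ ne G" for k
    unfolding opartitions_def ne_def using card_PiE[OF fin, of "\<lambda>_. {..<k}"] by simp
  have p1: "poly (P_d G) 1 = 2 ^ ne G" unfolding P_d_def poly_sum_monom1 ne_def
    using card_Pow[of "edges G"] fin by simp
  have p2: "poly (P_tdt G) 1 = 2 ^ ne G" unfolding P_tdt_def poly_sum_monom1 ne_def
    using card_Pow[of "edges G"] fin by simp
  have p3: "poly (P_dt G) 1 = 3 ^ ne G" unfolding P_dt_def poly_sum_monom1 cardO by simp
  have p6: "poly (P_dT G) 1 = 6 ^ ne G" unfolding P_dT_def poly_sum_monom1 cardO by simp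
  have o1: "\<forall>H\<in>Orb_d G. P_d G = P_d H"
  proof
    fix H assume "H \<in> Orb_d G"
    then obtain A where H: "H = apply_word [D] A G" unfolding Orb_d_def by blast
    have e: "eqv H G (updword [D] A base)" unfolding H by (rule eqv_word[OF G vb eb])
    have v: "validc G (updword [D] A base)" using validc_updword[OF vb] .
    have "\<forall>e\<in>edges G. updword [D] A base e \<in> Sd" by (simp add: updop_def base_def Sd_def)
    then show "P_d G = P_d H" using Pd_gen[OF G v e] PdG by simp
  qed
  have o2: "\<forall>H\<in>Orb_tdt G. P_tdt G = P_tdt H"
  proof
    fix H assume "H \<in> Orb_tdt G"
    then obtain A where H: "H = apply_word [T, D, T] A G" unfolding Orb_tdt_def by blast
    have e: "eqv H G (updword [T, D, T] A base)" unfolding H by (rule eqv_word[OF G vb eb])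
    have v: "validc G (updword [T, D, T] A base)" using validc_updword[OF vb] .
    have "\<forall>e\<in>edges G. updword [T, D, T] A base e \<in> St" by (simp add: updop_def base_def St_def)
    then show "P_tdt G = P_tdt H" using Ptdt_gen[OF G v e] PtG by simp
  qed
  have o3: "\<forall>H\<in>Orb_dt G. P_dt G = P_dt H"
  proof
    fix H assume "H \<in> Orb_dt G"
    then obtain q where q: "q \<in> opartitions G 3" and H: "H = G_dt G q" unfolding Orb_dt_def by blast
    define L where "L = [([], part G q 0), ([T, D], part G q 1), ([D, T], part G q 2)]"
    have e: "eqv H G (updseq L base)" unfolding H G_dt_def L_def by (rule eqv_seq[OF G vb eb])
    have v: "validc G (updseq L base)" using validc_updseq[OF vb] .
    have "\<forall>e\<in>edges G. updseq L base e \<in> S3"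
    proof
      fix e assume ee: "e \<in> edges G"
      then have qe: "q e < 3" using q unfolding opartitions_def by auto
      have "updseq L base e = wordst (W3 ! q e) (base e)" unfolding L_def using cfg_dt[of e G q base, OF ee qe] .
      then show "updseq L base e \<in> S3" using lt3[OF qe]
        by (auto simp: W3_def S3_def base_def)
    qed
    then show "P_dt G = P_dt H" using Pdt_gen[OF G v e] P3G by simp
  qed
  have o4: "\<forall>H\<in>Orb_dT G. P_dT G = P_dT H"
  proof
    fix H assume "H \<in> Orb_dT G"
    then obtain q where H: "H = G_dT G q" unfolding Orb_dT_def by blast
    define L where "L = [([], part G q 0), ([D], part G q 1), ([T], part G q 2),
                         ([T, D], part G q 3), ([D, T], part G q 4), ([T, D, T], part G q 5)]"
    have e: "eqv H G (updseq L base)" unfolding H G_dT_def L_def by (rule eqv_seq[OF G vb eb])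
    have v: "validc G (updseq L base)" using validc_updseq[OF vb] .
    show "P_dT G = P_dT H" using PdT_gen[OF G v e] P6G by simp
  qed
  have m1: "mindeg1_interpolating (P_d G)" unfolding PdG
    by (rule Q_interp[OF G con]) (auto simp: Sd_def Valid_def)
  have m2: "mindeg1_interpolating (P_tdt G)" unfolding PtG
    by (rule Q_interp[OF G con]) (auto simp: St_def Valid_def)
  have m3: "mindeg1_interpolating (P_dt G)" unfolding P3G
    by (rule Q_interp[OF G con]) (auto simp: S3_def Valid_def)
  have m4: "mindeg1_interpolating (P_dT G)" unfolding P6G
    by (rule Q_interp[OF G con]) (auto simp: Valid_def)
  show ?thesis using p1 p2 p3 p6 o1 o2 o3 o4 m1 m2 m3 m4 by blast
qed

end
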